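(* Let $M$ be the set of $H\times W$ images in HSV format $x=\{(h,s,v)_{ij}\}^{H\times W}$ with $s_{ij},v_{ij}\in[0,1]$ for which the transformation below is well defined (nonzero denominators). For such $x$ let $s_{\mathrm{mean}},s_{\max},v_{\mathrm{mean}},v_{\max}$ be the means and maximums over pixels of the saturation and brightness values. For $\theta=(\theta_S,\theta_V)$ define \[\mathsf{SV}(x,\theta)=\left\{\left(h,\ \frac{s+(2^{\theta_S}-1)s_{\mathrm{mean}}}{\mathsf{MAX}},\ \frac{v+(2^{\theta_V}-1)v_{\mathrm{mean}}}{\mathsf{MAX}}\right)_{ij}\right\}^{H\times W},\] where $\mathsf{MAX}=\max\big(s_{\max}+(2^{\theta_S}-1)s_{\mathrm{mean}},\ v_{\max}+(2^{\theta_V}-1)v_{\mathrm{mean}}\big)$. Then for all $x\in M$ and $\theta_1,\theta_2\in\mathbb{R}_{\ge0}^2$, $\mathsf{SV}(\mathsf{SV}(x,\theta_1),\theta_2)=\mathsf{SV}(x,\theta_1+\theta_2)$.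
   Context: The hue $h$ is left unchanged by $\mathsf{SV}$; only saturation and brightness values are shifted and renormalized. *)

theory Defs
  imports Main Complex_Main
begin

text \<open>An H x W image in HSV format: pixels indexed by finite types 'h and 'w
  (so H = CARD('h), W = CARD('w), both at least 1); each pixel is a triple (h, s, v).\<close>
type_synonym ('h, 'w) hsv_image = "'h \<Rightarrow> 'w \<Rightarrow> real \<times> real \<times> real"

definition hue :: "real \<times> real \<times> real \<Rightarrow> real" where "hue p = fst p"
definition sat :: "real \<times> real \<times> real \<Rightarrow> real" where "sat p = fst (snd p)"
definition val :: "real \<times> real \<times> real \<Rightarrow> real" where "val p = snd (snd p)"

definition s_mean :: "('h::finite, 'w::finite) hsv_image \<Rightarrow> real" where
  "s_mean x = (\<Sum>i\<in>UNIV. \<Sum>j\<in>UNIV. sat (x i j)) / (real (card (UNIV :: 'h set)) * real (card (UNIV :: 'w set)))"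
definition v_mean :: "('h::finite, 'w::finite) hsv_image \<Rightarrow> real" where
  "v_mean x = (\<Sum>i\<in>UNIV. \<Sum>j\<in>UNIV. val (x i j)) / (real (card (UNIV :: 'h set)) * real (card (UNIV :: 'w set)))"
definition s_max :: "('h::finite, 'w::finite) hsv_image \<Rightarrow> real" where
  "s_max x = Max {sat (x i j) | i j. True}"
definition v_max :: "('h::finite, 'w::finite) hsv_image \<Rightarrow> real" where
  "v_max x = Max {val (x i j) | i j. True}"

definition SV_MAX :: "('h::finite, 'w::finite) hsv_image \<Rightarrow> real \<Rightarrow> real \<Rightarrow> real" where
  "SV_MAX x tS tV = max (s_max x + (2 powr tS - 1) * s_mean x) (v_max x + (2 powr tV - 1) * v_mean x)"

definition SV :: "('h::finite, 'w::finite) hsv_image \<Rightarrow> real \<Rightarrow> real \<Rightarrow> ('h, 'w) hsv_image" where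
  "SV x tS tV = (\<lambda>i j.
     (hue (x i j),
      (sat (x i j) + (2 powr tS - 1) * s_mean x) / SV_MAX x tS tV,
      (val (x i j) + (2 powr tV - 1) * v_mean x) / SV_MAX x tS tV))"

definition M_set :: "('h::finite, 'w::finite) hsv_image set" where
  "M_set = {x. (\<forall>i j. sat (x i j) \<in> {0..1} \<and> val (x i j) \<in> {0..1}) \<and>
              (\<forall>tS tV. tS \<ge> 0 \<longrightarrow> tV \<ge> 0 \<longrightarrow> SV_MAX x tS tV \<noteq> 0)}"

end

theory Submission
  imports Defs
begin

lemma sum_aff:
  fixes f :: "'h::finite \<Rightarrow> 'w::finite \<Rightarrow> real"
  shows "(\<Sum>i\<in>UNIV. \<Sum>j\<in>UNIV. (f i j + k) / m) =
     ((\<Sum>i\<in>UNIV. \<Sum>j\<in>UNIV. f i j) + real (card (UNIV :: 'h set)) * real (card (UNIV :: 'w set)) * k) / m"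
  by (simp add: sum_divide_distrib[symmetric] sum.distrib sum_distrib_left add_divide_distrib)

lemma mean_aff:
  fixes f :: "'h::finite \<Rightarrow> 'w::finite \<Rightarrow> real"
  shows "(\<Sum>i\<in>UNIV. \<Sum>j\<in>UNIV. (f i j + k) / m) / (real (card (UNIV :: 'h set)) * real (card (UNIV :: 'w set)))
    = ((\<Sum>i\<in>UNIV. \<Sum>j\<in>UNIV. f i j) / (real (card (UNIV :: 'h set)) * real (card (UNIV :: 'w set))) + k) / m"
proof -
  have "real (card (UNIV :: 'h set)) > 0" "real (card (UNIV :: 'w set)) > 0" by (simp_all add: finite_UNIV_card_ge_0)
  then show ?thesis unfolding sum_aff by (simp add: field_simps)
qed

lemma max_aff:
  fixes f :: "'h::finite \<Rightarrow> 'w::finite \<Rightarrow> real"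
  assumes "m > 0"
  shows "Max {(f i j + k) / m | i j. True} = (Max {f i j | i j. True} + k) / m"
proof -
  let ?A = "{f i j | i j. True}"
  have fin: "finite ?A"
  proof -
    have "?A = (\<lambda>(i,j). f i j) ` UNIV" by auto
    then show ?thesis by simp
  qed
  have ne: "?A \<noteq> {}" by auto
  have mono: "mono (\<lambda>t. (t + k) / m)" using assms by (auto simp: mono_def divide_right_mono)
  have "{(f i j + k) / m | i j. True} = (\<lambda>t. (t + k) / m) ` ?A" by auto
  then show ?thesis using mono_Max_commute[OF mono fin ne] by simp
qed

lemma SV_stats:
  fixes x :: "('h::finite, 'w::finite) hsv_image"
  assumes "SV_MAX x tS tV > 0"
  shows "s_mean (SV x tS tV) = (s_mean x + (2 powr tS - 1) * s_mean x) / SV_MAX x tS tV"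
    "v_mean (SV x tS tV) = (v_mean x + (2 powr tV - 1) * v_mean x) / SV_MAX x tS tV"
    "s_max (SV x tS tV) = (s_max x + (2 powr tS - 1) * s_mean x) / SV_MAX x tS tV"
    "v_max (SV x tS tV) = (v_max x + (2 powr tV - 1) * v_mean x) / SV_MAX x tS tV"
proof -
  define m where "m = SV_MAX x tS tV"
  define ks where "ks = (2 powr tS - 1) * s_mean x"
  define kv where "kv = (2 powr tV - 1) * v_mean x"
  have e: "SV x tS tV = (\<lambda>i j. (hue (x i j), (sat (x i j) + ks) / m, (val (x i j) + kv) / m))"
    unfolding SV_def m_def ks_def kv_def by simp
  show "s_mean (SV x tS tV) = (s_mean x + (2 powr tS - 1) * s_mean x) / SV_MAX x tS tV"
    unfolding e s_mean_def[of "\<lambda>i j. (hue (x i j), (sat (x i j) + ks) / m, (val (x i j) + kv) / m)"]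
    by (simp add: sat_def mean_aff ks_def m_def s_mean_def)
  show "v_mean (SV x tS tV) = (v_mean x + (2 powr tV - 1) * v_mean x) / SV_MAX x tS tV"
    unfolding e v_mean_def[of "\<lambda>i j. (hue (x i j), (sat (x i j) + ks) / m, (val (x i j) + kv) / m)"]
    by (simp add: val_def mean_aff kv_def m_def v_mean_def)
  show "s_max (SV x tS tV) = (s_max x + (2 powr tS - 1) * s_mean x) / SV_MAX x tS tV"
    unfolding e s_max_def[of "\<lambda>i j. (hue (x i j), (sat (x i j) + ks) / m, (val (x i j) + kv) / m)"]
    using max_aff[OF assms[folded m_def], of "\<lambda>i j. sat (x i j)" ks]
    by (simp add: sat_def ks_def m_def s_max_def)
  show "v_max (SV x tS tV) = (v_max x + (2 powr tV - 1) * v_mean x) / SV_MAX x tS tV"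
    unfolding e v_max_def[of "\<lambda>i j. (hue (x i j), (sat (x i j) + ks) / m, (val (x i j) + kv) / m)"]
    using max_aff[OF assms[folded m_def], of "\<lambda>i j. val (x i j)" kv]
    by (simp add: val_def kv_def m_def v_max_def)
qed

lemma SVMAX_pos:
  fixes x :: "('h::finite, 'w::finite) hsv_image"
  assumes "x \<in> M_set" "tS \<ge> 0" "tV \<ge> 0"
  shows "SV_MAX x tS tV > 0"
proof -
  have ne: "SV_MAX x tS tV \<noteq> 0" using assms unfolding M_set_def by auto
  have fin: "finite {sat (x i j) | i j. True}"
  proof -
    have "{sat (x i j) | i j. True} = (\<lambda>(i,j). sat (x i j)) ` UNIV" by auto
    then show ?thesis by simp
  qed
  obtain i0 :: 'h and j0 :: 'w where True by simp
  have "sat (x i0 j0) \<le> s_max x" unfolding s_max_def using fin by (intro Max_ge) auto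
  moreover have "sat (x i0 j0) \<ge> 0" using assms unfolding M_set_def by auto
  moreover have "s_mean x \<ge> 0" unfolding s_mean_def using assms unfolding M_set_def
    by (intro divide_nonneg_nonneg sum_nonneg) auto
  moreover have "2 powr tS \<ge> 1" using assms by (simp add: ge_one_powr_ge_zero)
  ultimately have "s_max x + (2 powr tS - 1) * s_mean x \<ge> 0" by simp
  then have "SV_MAX x tS tV \<ge> 0" unfolding SV_MAX_def by simp
  with ne show ?thesis by simp
qed

theorem lemma4:
  fixes x :: "('h::finite, 'w::finite) hsv_image"
    and tS1 tV1 tS2 tV2 :: real
  assumes "x \<in> M_set"
    and "tS1 \<ge> 0" and "tV1 \<ge> 0" and "tS2 \<ge> 0" and "tV2 \<ge> 0"
  shows "SV (SV x tS1 tV1) tS2 tV2 = SV x (tS1 + tS2) (tV1 + tV2)"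
proof -
  define M1 where "M1 = SV_MAX x tS1 tV1"
  have p1: "M1 > 0" unfolding M1_def using SVMAX_pos assms by blast
  note st = SV_stats[OF p1[unfolded M1_def]]
  have pw: "2 powr (tS1 + tS2) = 2 powr tS1 * 2 powr tS2" "2 powr (tV1 + tV2) = 2 powr tV1 * 2 powr tV2"
    by (simp_all add: powr_add)
  have c1: "s_max (SV x tS1 tV1) + (2 powr tS2 - 1) * s_mean (SV x tS1 tV1)
      = (s_max x + (2 powr (tS1 + tS2) - 1) * s_mean x) / M1"
    unfolding st pw M1_def[symmetric] using p1 by (simp add: field_simps)
  have c2: "v_max (SV x tS1 tV1) + (2 powr tV2 - 1) * v_mean (SV x tS1 tV1)
      = (v_max x + (2 powr (tV1 + tV2) - 1) * v_mean x) / M1"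
    unfolding st pw M1_def[symmetric] using p1 by (simp add: field_simps)
  have M2: "SV_MAX (SV x tS1 tV1) tS2 tV2 = SV_MAX x (tS1 + tS2) (tV1 + tV2) / M1"
    unfolding SV_MAX_def c1 c2 using p1 by (simp add: max_divide_distrib_right)
  have p3: "SV_MAX x (tS1 + tS2) (tV1 + tV2) > 0" using assms by (intro SVMAX_pos) auto
  have q: "\<And>a b c N. M1 > 0 \<Longrightarrow> N > 0 \<Longrightarrow> ((a + b) / M1 + c / M1) / (N / M1) = (a + b + c) / N"
    by (simp add: field_simps)
  show ?thesis
    apply (rule ext)+
    unfolding SV_def[of "SV x tS1 tV1"] M2 st M1_def[symmetric]
    apply (simp add: SV_def hue_def sat_def val_def M1_def[symmetric])
    using p1 p3 by (simp add: pw divide_simps) (simp add: algebra_simps)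
qed

end
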